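(* Let $\mathcal{T}$ be a set of monomials, and let $\mathcal{L}=(n,\mathcal{M},\mathcal{C})$ be a simple linearization with $\mathcal{S}\cup\mathcal{T}\subseteq\mathcal{M}$ such that every node of $D(\mathcal{L})$ with in-degree $0$ belongs to $\mathcal{T}$. Let $m_1,m_2\in\mathcal{M}$ with $m_1\cap m_2\neq\emptyset$ and $m_1\cap m_2\notin\mathrm{succ}(m_1)\cap\mathrm{succ}(m_2)$. Then $G(D(\mathcal{L}))$ contains a cycle.
   Context: $[n]=\{1,\dots,n\}$; a monomial is a nonempty subset of $[n]$; $\mathcal{S}=\{\{i\}:i\in[n]\}$. A linearization is a triple $\mathcal{L}=(n,\mathcal{M},\mathcal{C})$, where $\mathcal{M}$ is a set of monomials with $\mathcal{S}\subseteq\mathcal{M}$ and $\mathcal{C}$ is a set of AND-constraints; each AND-constraint is a set $c\subseteq\mathcal{M}$ whose union $\bigcup c$ (resultant) lies in $\mathcal{M}$. $\mathcal{P}=\mathcal{M}\setminus\mathcal{S}$. Linearizations are consistent: each $m\in\mathcal{P}$ is the resultant of some $c$ with $|m'|<|m|$ for all $m'\in c$. $\mathcal{L}$ is simple if each proper monomial is the resultant of exactly one AND-constraint and $|\mathcal{C}|=|\mathcal{P}|$. $D(\mathcal{L})$ has node set $\mathcal{M}$ and, for each $c\in\mathcal{C}$, arcs from $\bigcup c$ to each $m\in c$; $G(D(\mathcal{L}))$ is its underlying undirected graph. $\mathrm{succ}(m)$ is the set of nodes reachable from $m$ by a directed path in $D(\mathcal{L})$, including $m$. *)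

theory Defs
  imports Main
begin

definition monomial :: "nat \<Rightarrow> nat set \<Rightarrow> bool" where
  "monomial n m \<longleftrightarrow> m \<noteq> {} \<and> m \<subseteq> {1..n}"

definition singletons :: "nat \<Rightarrow> nat set set" where
  "singletons n = {{i} | i. i \<in> {1..n}}"

definition linearization :: "nat \<Rightarrow> nat set set \<Rightarrow> nat set set set \<Rightarrow> bool" where
  "linearization n M C \<longleftrightarrow>
     (\<forall>m\<in>M. monomial n m) \<and> singletons n \<subseteq> M \<and>
     (\<forall>c\<in>C. c \<subseteq> M \<and> \<Union>c \<in> M) \<and>
     (\<forall>m \<in> M - singletons n. \<exists>c\<in>C. \<Union>c = m \<and> (\<forall>m'\<in>c. card m' < card m))"

definition simple_linearization :: "nat \<Rightarrow> nat set set \<Rightarrow> nat set set set \<Rightarrow> bool" where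
  "simple_linearization n M C \<longleftrightarrow>
     linearization n M C \<and>
     (\<forall>m \<in> M - singletons n. \<exists>!c. c \<in> C \<and> \<Union>c = m) \<and>
     card C = card (M - singletons n)"

definition lin_arcs :: "nat set set set \<Rightarrow> (nat set \<times> nat set) set" where
  "lin_arcs C = {(\<Union>c, m) | c m. c \<in> C \<and> m \<in> c}"

definition in_degree_zero :: "nat set set set \<Rightarrow> nat set \<Rightarrow> bool" where
  "in_degree_zero C v \<longleftrightarrow> \<not> (\<exists>u. (u, v) \<in> lin_arcs C)"

definition succ :: "nat set set set \<Rightarrow> nat set \<Rightarrow> nat set set" where
  "succ C m = {v. (m, v) \<in> (lin_arcs C)\<^sup>*}"

definition ug_adj :: "nat set set set \<Rightarrow> nat set \<Rightarrow> nat set \<Rightarrow> bool" where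
  "ug_adj C u v \<longleftrightarrow> (u, v) \<in> lin_arcs C \<or> (v, u) \<in> lin_arcs C"

definition ug_has_cycle :: "nat set set \<Rightarrow> nat set set set \<Rightarrow> bool" where
  "ug_has_cycle M C \<longleftrightarrow>
     (\<exists>vs. length vs \<ge> 3 \<and> distinct vs \<and> set vs \<subseteq> M \<and>
        (\<forall>i < length vs. ug_adj C (vs ! i) (vs ! ((i + 1) mod length vs))))"

end

theory Submission imports Defs begin

fun uwalk :: "nat set set set \<Rightarrow> nat set list \<Rightarrow> bool" where
  "uwalk C [] = True"
| "uwalk C [x] = True"
| "uwalk C (x # y # xs) = (ug_adj C x y \<and> uwalk C (y # xs))"

fun dwalk :: "nat set set set \<Rightarrow> nat set list \<Rightarrow> bool" where
  "dwalk C [] = True"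
| "dwalk C [x] = True"
| "dwalk C (x # y # xs) = ((x, y) \<in> lin_arcs C \<and> dwalk C (y # xs))"

lemma ug_adj_sym: "ug_adj C x y = ug_adj C y x"
  unfolding ug_adj_def by blast

lemma uwalk_append: "uwalk C (xs @ y # ys) = (uwalk C (xs @ [y]) \<and> uwalk C (y # ys))"
proof (induction xs)
  case Nil then show ?case by (cases ys) auto
next
  case (Cons a xs) then show ?case by (cases xs) auto
qed

lemma dwalk_append: "dwalk C (xs @ y # ys) = (dwalk C (xs @ [y]) \<and> dwalk C (y # ys))"
proof (induction xs)
  case Nil then show ?case by (cases ys) auto
next
  case (Cons a xs) then show ?case by (cases xs) auto
qed

lemma uwalk_rev: "uwalk C (rev xs) = uwalk C xs"
proof (induction xs rule: uwalk.induct)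
  case (3 C x y xs)
  have "uwalk C (rev (x # y # xs)) = uwalk C (rev xs @ y # [x])" by simp
  also have "\<dots> = (uwalk C (rev xs @ [y]) \<and> uwalk C [y, x])" by (rule uwalk_append)
  also have "\<dots> = (uwalk C (y # xs) \<and> ug_adj C x y)"
    using 3 by (simp add: ug_adj_sym)
  finally show ?case by auto
qed auto

lemma dwalk_uwalk: "dwalk C xs \<Longrightarrow> uwalk C xs"
  by (induction C xs rule: dwalk.induct) (auto simp: ug_adj_def)

lemma dwalk_trancl: "dwalk C (x # xs) \<Longrightarrow> w \<in> set xs \<Longrightarrow> (x, w) \<in> (lin_arcs C)\<^sup>+"
proof (induction xs arbitrary: x)
  case (Cons a xs)
  then show ?case by (cases "w = a") (auto intro: trancl_into_trancl2)
qed auto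

lemma dwalk_last: "dwalk C (x # xs) \<Longrightarrow> (x, last (x # xs)) \<in> (lin_arcs C)\<^sup>*"
  using dwalk_trancl[of C x xs "last xs"] by (cases "xs = []") auto

lemma dwalk_before: "dwalk C (xs @ [u]) \<Longrightarrow> v \<in> set xs \<Longrightarrow> (v, u) \<in> (lin_arcs C)\<^sup>+"
proof -
  assume d: "dwalk C (xs @ [u])" and v: "v \<in> set xs"
  then obtain A B where "xs = A @ v # B" by (meson split_list)
  with d have "dwalk C (v # B @ [u])" using dwalk_append[of C A v "B @ [u]"] by simp
  then show ?thesis using dwalk_trancl by fastforce
qed

lemma dwalk_of_rtrancl: "(x, y) \<in> (lin_arcs C)\<^sup>* \<Longrightarrow> \<exists>xs. dwalk C (x # xs) \<and> last (x # xs) = y"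
proof (induction rule: converse_rtrancl_induct)
  case base then show ?case by (intro exI[of _ "[]"]) auto
next
  case (step x z)
  then obtain xs where "dwalk C (z # xs)" "last (z # xs) = y" by blast
  then show ?case using step by (intro exI[of _ "z # xs"]) auto
qed

lemma uwalk_nth: "uwalk C xs \<Longrightarrow> Suc i < length xs \<Longrightarrow> ug_adj C (xs ! i) (xs ! Suc i)"
proof (induction C xs arbitrary: i rule: uwalk.induct)
  case (3 C x y xs)
  then show ?case by (cases i) auto
qed auto

lemma cycle_intro:
  assumes "uwalk C vs" "length vs \<ge> 3" "distinct vs" "set vs \<subseteq> M" "ug_adj C (last vs) (hd vs)"
  shows "ug_has_cycle M C"
  unfolding ug_has_cycle_def
proof (intro exI[of _ vs] conjI allI impI)
  fix i assume i: "i < length vs"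
  show "ug_adj C (vs ! i) (vs ! ((i + 1) mod length vs))"
  proof (cases "Suc i < length vs")
    case True then show ?thesis using uwalk_nth[OF assms(1) True] by simp
  next
    case False
    then have "i = length vs - 1" using i by simp
    moreover have "vs \<noteq> []" using assms(2) by auto
    ultimately show ?thesis using assms(5) i
      by (simp add: last_conv_nth hd_conv_nth)
  qed
qed (use assms in auto)


lemma unique_path:
  assumes "\<not> ug_has_cycle M C"
  shows "uwalk C p \<Longrightarrow> uwalk C q \<Longrightarrow> distinct p \<Longrightarrow> distinct q \<Longrightarrow> set p \<subseteq> M \<Longrightarrow> set q \<subseteq> M
    \<Longrightarrow> p \<noteq> [] \<Longrightarrow> q \<noteq> [] \<Longrightarrow> hd p = hd q \<Longrightarrow> last p = last q \<Longrightarrow> p = q"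
proof (induction p arbitrary: q)
  case Nil then show ?case by simp
next
  case (Cons x p')
  obtain q' where q: "q = x # q'" using Cons.prems by (cases q) auto
  show ?case
  proof (cases p')
    case Nil
    then have "last q = x" using Cons.prems by simp
    show ?thesis
    proof (cases q')
      case (Cons z zs)
      then have "last q \<in> set q'" using q by simp
      then show ?thesis using \<open>last q = x\<close> Cons.prems(4) q by simp
    qed (use q Nil in simp)
  next
    case (Cons x' p'')
    have "q' \<noteq> []"
    proof
      assume "q' = []"
      then have "last p' = x" using Cons.prems q \<open>p' = x' # p''\<close> by simp
      then show False using Cons.prems \<open>p' = x' # p''\<close> by (metis distinct.simps(2) last_in_set list.distinct(1))
    qed
    then obtain y q'' where q': "q' = y # q''" by (cases q') auto
    show ?thesis
    proof (cases "x' = y")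
      case True
      have "p' = q'"
        using Cons.IH[of q'] Cons.prems q q' \<open>p' = x' # p''\<close> True by auto
      then show ?thesis using q by simp
    next
      case False
      have lastin: "last p' \<in> set q'"
        using Cons.prems q q' \<open>p' = x' # p''\<close> by auto
      obtain A w B where pA: "p' = A @ w # B" and wq: "w \<in> set q'" and Aq: "\<forall>v\<in>set A. v \<notin> set q'"
        using split_list_first_prop[of p' "\<lambda>v. v \<in> set q'"] lastin
        by (metis \<open>p' = x' # p''\<close> last_in_set list.distinct(1))
      obtain Q1 Q2 where qQ: "q' = Q1 @ w # Q2" using wq by (meson split_list)
      define vs where "vs = x # A @ w # rev Q1"
      have dp: "distinct (x # A @ w # B)" using Cons.prems pA by simp
      have dq: "distinct (x # Q1 @ w # Q2)" using Cons.prems q qQ by simp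
      have "distinct vs" unfolding vs_def using dp dq Aq qQ by auto
      moreover have "set vs \<subseteq> M" unfolding vs_def using Cons.prems q qQ pA by auto
      moreover have "length vs \<ge> 3"
      proof (rule ccontr)
        assume "\<not> 3 \<le> length vs"
        then have "A = []" "Q1 = []" unfolding vs_def by (auto simp: not_le)
        then show False using pA qQ q' \<open>p' = x' # p''\<close> False by simp
      qed
      moreover have "uwalk C vs"
      proof -
        have u1: "uwalk C ((x # A) @ [w])"
          using Cons.prems(1) pA uwalk_append[of C "x # A" w B] by simp
        have "uwalk C ((x # Q1) @ [w])"
          using Cons.prems(2) q qQ uwalk_append[of C "x # Q1" w Q2] by simp
        then have "uwalk C (Q1 @ [w])"
          using uwalk_append[of C "[x]"] by (cases Q1) auto
        then have "uwalk C (w # rev Q1)" using uwalk_rev[of C "Q1 @ [w]"] by simp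
        then show ?thesis unfolding vs_def using u1 uwalk_append[of C "x # A" w "rev Q1"] by simp
      qed
      moreover have "ug_adj C (last vs) (hd vs)"
      proof (cases Q1)
        case Nil
        then have "uwalk C (x # w # Q2)" using Cons.prems(2) q qQ by simp
        then show ?thesis using Nil unfolding vs_def by (simp add: ug_adj_sym)
      next
        case (Cons z Q1')
        then have "uwalk C (x # z # Q1' @ w # Q2)" using Cons.prems(2) q qQ by simp
        then show ?thesis using Cons unfolding vs_def by (simp add: ug_adj_sym)
      qed
      ultimately have "ug_has_cycle M C" using cycle_intro by blast
      then show ?thesis using assms by simp
    qed
  qed
qed


lemma trancl_card:
  assumes "\<forall>x y. (x, y) \<in> lin_arcs C \<longrightarrow> card y < card x"
  shows "(x, y) \<in> (lin_arcs C)\<^sup>+ \<Longrightarrow> card y < card x"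
  by (induction rule: trancl_induct) (use assms in fastforce)+

lemma dwalk_distinct:
  assumes "\<forall>x y. (x, y) \<in> lin_arcs C \<longrightarrow> card y < card x"
  shows "dwalk C xs \<Longrightarrow> distinct xs"
proof (induction xs)
  case (Cons x xs)
  have "dwalk C xs" using Cons.prems by (cases xs) auto
  moreover have "x \<notin> set xs"
    using dwalk_trancl[OF Cons.prems] trancl_card[OF assms] by blast
  ultimately show ?case using Cons.IH by simp
qed simp

lemma dwalk_set:
  assumes "\<forall>x y. (x, y) \<in> lin_arcs C \<longrightarrow> y \<in> M" "x \<in> M" "dwalk C (x # xs)"
  shows "set (x # xs) \<subseteq> M"
proof
  fix w assume "w \<in> set (x # xs)"
  then consider "w = x" | "w \<in> set xs" by auto
  then show "w \<in> M"
  proof cases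
    case 2
    then have "(x, w) \<in> (lin_arcs C)\<^sup>+" using dwalk_trancl assms(3) by blast
    then show ?thesis using assms(1) by (induction rule: trancl_induct) auto
  qed (use assms in simp)
qed

theorem lemma4p3:
  fixes n :: nat and M T :: "nat set set" and C :: "nat set set set" and m1 m2 :: "nat set"
  assumes "simple_linearization n M C"
    and "\<forall>t\<in>T. monomial n t"
    and "singletons n \<union> T \<subseteq> M"
    and "\<forall>v\<in>M. in_degree_zero C v \<longrightarrow> v \<in> T"
    and "m1 \<in> M" and "m2 \<in> M"
    and "m1 \<inter> m2 \<noteq> {}"
    and "m1 \<inter> m2 \<notin> succ C m1 \<inter> succ C m2"
  shows "ug_has_cycle M C"
proof (rule ccontr)
  assume nocyc: "\<not> ug_has_cycle M C"
  let ?S = "singletons n"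
  let ?R = "lin_arcs C"
  have lin: "linearization n M C"
    and uniq: "\<forall>m \<in> M - ?S. \<exists>!c. c \<in> C \<and> \<Union>c = m"
    and cardC: "card C = card (M - ?S)"
    using assms(1) unfolding simple_linearization_def by auto
  have Mmon: "\<forall>m\<in>M. monomial n m" and SM: "?S \<subseteq> M"
    and CM: "\<forall>c\<in>C. c \<subseteq> M \<and> \<Union>c \<in> M"
    and cons: "\<forall>m \<in> M - ?S. \<exists>c\<in>C. \<Union>c = m \<and> (\<forall>m'\<in>c. card m' < card m)"
    using lin unfolding linearization_def by auto
  have "M \<subseteq> Pow {1..n}" using Mmon unfolding monomial_def by auto
  then have finM: "finite M" by (rule finite_subset) simp
  have "C \<subseteq> Pow M" using CM by auto
  then have finC: "finite C" using finM by (simp add: finite_subset)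
  have finm: "finite m" if "m \<in> M" for m
    using Mmon that unfolding monomial_def by (meson finite_atLeastAtMost finite_subset)
  define f where "f m = (THE c. c \<in> C \<and> \<Union>c = m)" for m
  have fm: "f m \<in> C \<and> \<Union>(f m) = m" if "m \<in> M - ?S" for m
    unfolding f_def using theI'[OF uniq[rule_format, OF that]] .
  have injf: "inj_on f (M - ?S)"
    by (rule inj_onI) (metis fm)
  have "f ` (M - ?S) \<subseteq> C" using fm by auto
  moreover have "card (f ` (M - ?S)) = card C" using card_image[OF injf] cardC by simp
  ultimately have fC: "f ` (M - ?S) = C" using finC by (simp add: card_subset_eq)
  have Cgood: "\<Union>c \<in> M - ?S \<and> (\<forall>m'\<in>c. card m' < card (\<Union>c))" if cC: "c \<in> C" for c
  proof -
    have "c \<in> f ` (M - ?S)" using fC cC by simp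
    then obtain m where m1: "m \<in> M - ?S" and m2: "c = f m" by (rule imageE)
    have um: "\<Union>c = m" using fm[OF m1] m2 by simp
    have "\<exists>c\<in>C. \<Union>c = m \<and> (\<forall>m'\<in>c. card m' < card m)" using cons m1 by (rule bspec)
    then obtain c0 where c0: "c0 \<in> C" "\<Union>c0 = m" "\<forall>m'\<in>c0. card m' < card m" by auto
    have ex: "\<exists>!c. c \<in> C \<and> \<Union>c = m" using uniq m1 by (rule bspec)
    have "c0 = c" using ex um cC c0(1,2) by (metis (no_types, lifting))
    then have "\<forall>m'\<in>c. card m' < card (\<Union>c)" using c0(3) um by simp
    then show ?thesis using m1 um by simp
  qed
  have arc: "x \<in> M \<and> y \<in> M \<and> y \<subseteq> x \<and> card y < card x" if xy: "(x, y) \<in> ?R" for x y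
  proof -
    obtain c where "c \<in> C" "x = \<Union>c" "y \<in> c" using xy unfolding lin_arcs_def by blast
    then show ?thesis using Cgood[of c] CM by auto
  qed
  have arc_card: "\<forall>x y. (x, y) \<in> ?R \<longrightarrow> card y < card x" using arc by blast
  have arc_M: "\<forall>x y. (x, y) \<in> ?R \<longrightarrow> y \<in> M" using arc by blast
  have rt_sub: "y \<subseteq> x" if "(x, y) \<in> ?R\<^sup>*" for x y
    using that by (induction rule: rtrancl_induct) (use arc in blast)+
  have sing: "(m, {i}) \<in> ?R\<^sup>*" if "m \<in> M" "i \<in> m" for m i
    using that
  proof (induction "card m" arbitrary: m rule: less_induct)
    case less
    show ?case
    proof (cases "m \<in> ?S")
      case True
      then show ?thesis using less.prems unfolding singletons_def by auto
    next
      case False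
      then have "m \<in> M - ?S" using less.prems by simp
      then have "\<exists>c\<in>C. \<Union>c = m \<and> (\<forall>m'\<in>c. card m' < card m)" using cons by (rule bspec[rotated])
      then obtain c where c: "c \<in> C" "\<Union>c = m" "\<forall>m'\<in>c. card m' < card m" by auto
      then obtain m' where m': "m' \<in> c" "i \<in> m'" using less.prems by blast
      have "(m, m') \<in> ?R" unfolding lin_arcs_def using c m' by blast
      moreover have "(m', {i}) \<in> ?R\<^sup>*" using less.hyps[of m'] c m' CM by blast
      ultimately show ?thesis by simp
    qed
  qed
  let ?K = "m1 \<inter> m2"
  have key: "\<exists>L A u A2. uwalk C L \<and> distinct L \<and> set L \<subseteq> M \<and> L \<noteq> [] \<and> hd L = m1 \<and> last L = m2
     \<and> L = A @ u # rev A2 \<and> (m1, u) \<in> ?R\<^sup>* \<and> (m2, u) \<in> ?R\<^sup>* \<and> (u, {i}) \<in> ?R\<^sup>*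
     \<and> (\<forall>v\<in>set A \<union> set A2. card u < card v)" if i: "i \<in> ?K" for i
  proof -
    obtain xs1 where d1: "dwalk C (m1 # xs1)" "last (m1 # xs1) = {i}"
      using dwalk_of_rtrancl sing[OF assms(5)] i by blast
    obtain xs2 where d2: "dwalk C (m2 # xs2)" "last (m2 # xs2) = {i}"
      using dwalk_of_rtrancl sing[OF assms(6)] i by blast
    define P1 where "P1 = m1 # xs1"
    define P2 where "P2 = m2 # xs2"
    have "last P1 \<in> set P2" using d1 d2 unfolding P1_def P2_def by (metis last_in_set list.distinct(1))
    then obtain A u B where pA: "P1 = A @ u # B" and uP2: "u \<in> set P2" and AP2: "\<forall>v\<in>set A. v \<notin> set P2"
      using split_list_first_prop[of P1 "\<lambda>v. v \<in> set P2"]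
      by (metis P1_def last_in_set list.distinct(1))
    obtain A2 B2 where pA2: "P2 = A2 @ u # B2" using uP2 by (meson split_list)
    have dA: "dwalk C (A @ [u])" "dwalk C (u # B)"
      using d1(1) pA dwalk_append[of C A u B] unfolding P1_def by auto
    have dA2: "dwalk C (A2 @ [u])" using d2(1) pA2 dwalk_append[of C A2 u B2] unfolding P2_def by auto
    have dist1: "distinct P1" "distinct P2"
      using dwalk_distinct[OF arc_card, of P1] dwalk_distinct[OF arc_card, of P2] d1(1) d2(1)
      unfolding P1_def P2_def by auto
    have set1: "set P1 \<subseteq> M" "set P2 \<subseteq> M"
      using dwalk_set[OF arc_M] d1 d2 assms(5,6) unfolding P1_def P2_def by auto
    define L where "L = A @ u # rev A2"
    have "uwalk C (A @ [u])" using dA dwalk_uwalk by blast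
    moreover have "uwalk C (u # rev A2)"
      using dwalk_uwalk[OF dA2] uwalk_rev[of C "A2 @ [u]"] by simp
    ultimately have uw: "uwalk C L" unfolding L_def using uwalk_append by blast
    have dL: "distinct L" unfolding L_def using dist1 pA pA2 AP2 by auto
    have sL: "set L \<subseteq> M" unfolding L_def using set1 pA pA2 by auto
    have hL: "hd L = m1" unfolding L_def using pA unfolding P1_def by (cases A) auto
    have lL: "last L = m2" unfolding L_def using pA2 unfolding P2_def by (cases A2) auto
    have r1: "(m1, u) \<in> ?R\<^sup>*"
    proof -
      have "u \<in> set P1" using pA by simp
      then show ?thesis unfolding P1_def using dwalk_trancl[OF d1(1)] by (auto intro: trancl_into_rtrancl)
    qed
    have r2: "(m2, u) \<in> ?R\<^sup>*"
      using uP2 unfolding P2_def using dwalk_trancl[OF d2(1)] by (auto intro: trancl_into_rtrancl)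
    have r3: "(u, {i}) \<in> ?R\<^sup>*"
      using dwalk_last[OF dA(2)] d1(2) pA unfolding P1_def by (metis last_appendR list.distinct(1))
    have cd: "\<forall>v\<in>set A \<union> set A2. card u < card v"
    proof
      fix v assume "v \<in> set A \<union> set A2"
      then have "(v, u) \<in> ?R\<^sup>+" using dwalk_before[OF dA(1)] dwalk_before[OF dA2] by blast
      then show "card u < card v" by (rule trancl_card[OF arc_card])
    qed
    show ?thesis
      by (intro exI[of _ L] exI[of _ A] exI[of _ u] exI[of _ A2] conjI)
         (use uw dL sL hL lL r1 r2 r3 cd L_def in simp_all)
  qed
  obtain i0 where i0: "i0 \<in> ?K" using assms(7) by blast
  obtain L0 A0 u0 A20 where k0: "uwalk C L0" "distinct L0" "set L0 \<subseteq> M" "L0 \<noteq> []" "hd L0 = m1" "last L0 = m2"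
     "L0 = A0 @ u0 # rev A20" "(m1, u0) \<in> ?R\<^sup>*" "(m2, u0) \<in> ?R\<^sup>*"
     "\<forall>v\<in>set A0 \<union> set A20. card u0 < card v"
    using key[OF i0] by blast
  have "i \<in> u0" if i: "i \<in> ?K" for i
  proof -
    obtain L A u A2 where k: "uwalk C L" "distinct L" "set L \<subseteq> M" "L \<noteq> []" "hd L = m1" "last L = m2"
     "L = A @ u # rev A2" "(u, {i}) \<in> ?R\<^sup>*" "\<forall>v\<in>set A \<union> set A2. card u < card v"
      using key[OF i] by blast
    have "L = L0" using unique_path[OF nocyc, of L L0] k(1-6) k0(1-6) by simp
    have "u = u0"
    proof (rule ccontr)
      assume ne: "u \<noteq> u0"
      have uL: "u \<in> set L0" using k(7) \<open>L = L0\<close> by simp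
      have u0L: "u0 \<in> set L" using k0(7) \<open>L = L0\<close> by simp
      have "u \<in> set A0 \<union> set A20" using uL ne unfolding k0(7) by auto
      moreover have "u0 \<in> set A \<union> set A2" using u0L ne unfolding k(7) by auto
      ultimately have "card u < card u0" "card u0 < card u" using k(9) k0(10) by blast+
      then show False by simp
    qed
    then show ?thesis using rt_sub[OF k(8)] by blast
  qed
  then have "?K \<subseteq> u0" by blast
  moreover have "u0 \<subseteq> ?K" using rt_sub k0(8,9) by blast
  ultimately have "u0 = ?K" by blast
  then have "?K \<in> succ C m1 \<inter> succ C m2" using k0(8,9) unfolding succ_def by simp
  then show False using assms(8) by blast
qed

end
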